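(* Let $\{q_k\}$ be a sequence of generalized quadratic forms on $\mathbb{R}^n$. Then: (i) some subsequence of $\{q_k\}$ epi-converges to a function $q\not\equiv\infty$; (ii) if $\{q_k\}$ epi-converges to $q$ and there is $r\ge0$ such that $q_k(w)\ge-r\|w\|^2$ for all $w\in\mathbb{R}^n$ and all sufficiently large $k$, then $q$ is a generalized quadratic form and $q(w)\ge-r\|w\|^2$ for all $w\in\mathbb{R}^n$.
   Context: A generalized quadratic form is a function $q=\frac12\langle\cdot,A\cdot\rangle+\delta_L$ with $A$ a symmetric $n\times n$ matrix and $L$ a linear subspace ($\delta_L$ its indicator). Epi-convergence $q_k\to q$: for every $x$, $\liminf q_k(x_k)\ge q(x)$ for every $x_k\to x$, and $\limsup q_k(x_k)\le q(x)$ for some $x_k\to x$ (equivalently, epigraphs converge in the Painlevé–Kuratowski sense). *)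

theory Defs
  imports "HOL-Analysis.Analysis" "HOL-Library.Extended_Real"
begin

definition gen_quad_form :: "(real^'n \<Rightarrow> ereal) \<Rightarrow> bool" where
  "gen_quad_form q \<longleftrightarrow>
     (\<exists>(A::real^'n^'n) (L::(real^'n) set).
        transpose A = A \<and> subspace L \<and>
        q = (\<lambda>x. if x \<in> L then ereal ((1/2) * (x \<bullet> (A *v x))) else \<infinity>))"

definition epi_converges :: "(nat \<Rightarrow> 'a::topological_space \<Rightarrow> ereal) \<Rightarrow> ('a \<Rightarrow> ereal) \<Rightarrow> bool" where
  "epi_converges qs q \<longleftrightarrow>
     (\<forall>x. (\<forall>xs. xs \<longlonglongrightarrow> x \<longrightarrow> liminf (\<lambda>k. qs k (xs k)) \<ge> q x) \<and>
          (\<exists>xs. xs \<longlonglongrightarrow> x \<and> limsup (\<lambda>k. qs k (xs k)) \<le> q x))"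

end

theory Submission
  imports Defs "HOL-Library.Diagonal_Subsequence"
begin


lemma additive_bounded_linear:
  fixes h :: "real \<Rightarrow> real"
  assumes add: "\<And>a b. h (a + b) = h a + h b"
    and bnd: "\<And>t. \<bar>t\<bar> \<le> 1 \<Longrightarrow> h t \<ge> - M"
  shows "h t = t * h 1"
proof -
  define c where "c = h 1"
  define g where "g s = h s - s * c" for s
  have gadd: "g (a + b) = g a + g b" for a b
    unfolding g_def using add[of a b] by (simp add: algebra_simps)
  have g0: "g 0 = 0" using gadd[of 0 0] by simp
  have gneg: "g (- a) = - g a" for a using gadd[of a "-a"] g0 by simp
  have g1: "g 1 = 0" unfolding g_def c_def by simp
  have gnat: "g (real n * a) = real n * g a" for n a
  proof (induction n)
    case (Suc n)
    have "g (real (Suc n) * a) = g (a + real n * a)" by (simp add: algebra_simps)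
    also have "\<dots> = g a + real n * g a" using gadd Suc by simp
    finally show ?case by (simp add: algebra_simps)
  qed (simp add: g0)
  have gint: "g (of_int m) = 0" for m
  proof (cases "m \<ge> 0")
    case True
    define n where "n = nat m"
    have "m = int n" using True unfolding n_def by simp
    then show ?thesis using gnat[of n 1] g1 by simp
  next
    case False
    define n where "n = nat (- m)"
    have "m = - int n" using False unfolding n_def by simp
    then show ?thesis using gnat[of n 1] g1 gneg[of "real n"] by simp
  qed
  have gb: "g s \<ge> - (M + \<bar>c\<bar>)" if "\<bar>s\<bar> \<le> 1" for s
  proof -
    have "\<bar>s * c\<bar> \<le> \<bar>c\<bar>" using that by (simp add: abs_mult mult_left_le_one_le)
    then show ?thesis using bnd[OF that] unfolding g_def by linarith
  qed
  have "g t = 0"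
  proof (rule ccontr)
    assume ne: "g t \<noteq> 0"
    define K where "K = M + \<bar>c\<bar>"
    obtain n :: nat where n: "real n * \<bar>g t\<bar> > K" 
      using ne reals_Archimedean3[of "\<bar>g t\<bar>"] by auto
    define s where "s = real n * t - of_int \<lfloor>real n * t\<rfloor>"
    have s01: "0 \<le> s" "s < 1" unfolding s_def by linarith+
    have gs: "g s = real n * g t"
    proof -
      have "g (real n * t) = g (s + of_int \<lfloor>real n * t\<rfloor>)" unfolding s_def by simp
      then show ?thesis using gadd[of s "of_int \<lfloor>real n * t\<rfloor>"] gint gnat[of n t] by simp
    qed
    have "g s \<ge> - K" "g (- s) \<ge> - K" using gb s01 unfolding K_def by auto
    moreover have "\<bar>g s\<bar> = real n * \<bar>g t\<bar>" by (simp add: gs abs_mult)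
    ultimately show False using gneg[of s] n by linarith
  qed
  then show ?thesis unfolding g_def c_def by simp
qed



lemma proj_exists:
  fixes L :: "'a::euclidean_space set"
  assumes "subspace L"
  obtains P where "linear P" "\<And>x. P x \<in> L" "\<And>x. x \<in> L \<Longrightarrow> P x = x"
proof -
  have "\<exists>g. range g \<subseteq> L \<and> linear g \<and> (\<forall>v\<in>L. g v = v)"
    using linear_exists_left_inverse_on[of id L] assms linear_id by auto
  then show ?thesis using that by blast
qed

lemma bilinear_matrix:
  fixes \<beta> :: "real^'n \<Rightarrow> real^'n \<Rightarrow> real"
  assumes l1: "\<And>v. linear (\<lambda>u. \<beta> u v)" and l2: "\<And>u. linear (\<lambda>v. \<beta> u v)"
  shows "x \<bullet> ((\<chi> i j. \<beta> (axis i 1) (axis j 1)) *v x) = \<beta> x x"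
proof -
  have "\<beta> x x = \<beta> (\<Sum>i\<in>UNIV. x$i *\<^sub>R axis i 1) x"
    using basis_expansion[of x] by (simp add: scalar_mult_eq_scaleR)
  also have "\<dots> = (\<Sum>i\<in>UNIV. x$i * \<beta> (axis i 1) x)"
    using linear_sum[OF l1[of x], of "\<lambda>i. x$i *\<^sub>R axis i 1" UNIV] linear_scale[OF l1[of x]] by simp
  also have "\<dots> = (\<Sum>i\<in>UNIV. x$i * (\<Sum>j\<in>UNIV. x$j * \<beta> (axis i 1) (axis j 1)))"
  proof (rule sum.cong[OF refl])
    fix i
    have "\<beta> (axis i 1) x = \<beta> (axis i 1) (\<Sum>j\<in>UNIV. x$j *\<^sub>R axis j 1)"
      using basis_expansion[of x] by (simp add: scalar_mult_eq_scaleR)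
    also have "\<dots> = (\<Sum>j\<in>UNIV. x$j * \<beta> (axis i 1) (axis j 1))"
      using linear_sum[OF l2[of "axis i 1"], of "\<lambda>j. x$j *\<^sub>R axis j 1" UNIV] linear_scale[OF l2[of "axis i 1"]] by simp
    finally show "x$i * \<beta> (axis i 1) x = x$i * (\<Sum>j\<in>UNIV. x$j * \<beta> (axis i 1) (axis j 1))" by simp
  qed
  also have "\<dots> = x \<bullet> ((\<chi> i j. \<beta> (axis i 1) (axis j 1)) *v x)"
    by (simp add: inner_vec_def matrix_vector_mult_def mult.commute)
  finally show ?thesis by simp
qed



lemma quad_char:
  fixes f :: "real^'n \<Rightarrow> ereal" and r :: real
  assumes r: "r \<ge> 0"
    and lb: "\<And>x. f x \<ge> ereal (- r * (norm x)\<^sup>2)"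
    and f0: "f 0 = 0"
    and hom: "\<And>t x. t \<noteq> 0 \<Longrightarrow> f (t *\<^sub>R x) = ereal (t\<^sup>2) * f x"
    and par: "\<And>x y. f (x + y) + f (x - y) = 2 * f x + 2 * f y"
  shows "gen_quad_form f"
proof -
  define L where "L = {x. f x \<noteq> \<infinity>}"
  define g where "g x = real_of_ereal (f x)" for x
  have nminf: "f x \<noteq> -\<infinity>" for x using lb[of x] by auto
  have fin: "f x = ereal (g x)" if "x \<in> L" for x
    using that nminf[of x] unfolding L_def g_def by (cases "f x") auto
  have L0: "0 \<in> L" unfolding L_def using f0 by simp
  have Ladd: "x + y \<in> L" if "x \<in> L" "y \<in> L" for x y
  proof (rule ccontr)
    assume "x + y \<notin> L"
    then have "f (x + y) = \<infinity>" unfolding L_def by simp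
    then have "f (x + y) + f (x - y) = \<infinity>" using nminf[of "x-y"] by simp
    moreover have "2 * f x + 2 * f y \<noteq> \<infinity>" using fin that by simp
    ultimately show False using par[of x y] by simp
  qed
  have Lscale: "t *\<^sub>R x \<in> L" if "x \<in> L" for x t
  proof (cases "t = 0")
    case True then show ?thesis using L0 by simp
  next
    case False then show ?thesis using hom[OF False, of x] fin[OF that] unfolding L_def by simp
  qed
  have subL: "subspace L" unfolding subspace_def using L0 Ladd Lscale by blast
  have Lneg: "- x \<in> L" if "x \<in> L" for x using Lscale[OF that, of "-1"] by simp
  have Ldiff: "x - y \<in> L" if "x \<in> L" "y \<in> L" for x y
    using Ladd[OF that(1) Lneg[OF that(2)]] by simp
  have g0: "g 0 = 0" unfolding g_def using f0 by simp
  have gpar: "g (x + y) + g (x - y) = 2 * g x + 2 * g y" if "x \<in> L" "y \<in> L" for x y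
    using par[of x y] fin that Ladd Ldiff by simp
  have ghom: "g (t *\<^sub>R x) = t\<^sup>2 * g x" if "x \<in> L" for x t
  proof (cases "t = 0")
    case True then show ?thesis using g0 by simp
  next
    case False then show ?thesis using hom[OF False, of x] fin[OF that] fin[OF Lscale[OF that]] by simp
  qed
  have gneg: "g (- x) = g x" if "x \<in> L" for x using ghom[OF that, of "-1"] by simp
  have glb: "g x \<ge> - r * (norm x)\<^sup>2" if "x \<in> L" for x using lb[of x] fin[OF that] by simp
  define B where "B x y = (g (x + y) - g (x - y)) / 4" for x y
  have Bsym: "B x y = B y x" if "x \<in> L" "y \<in> L" for x y
    unfolding B_def using gneg[OF Ldiff[OF that]] by (simp add: add.commute)
  have Bdiag: "B x x = g x" if "x \<in> L" for x
    unfolding B_def using ghom[OF that, of 2] g0 by (simp add: scaleR_2)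
  have B0: "B 0 y = 0" if "y \<in> L" for y unfolding B_def using gneg[OF that] by simp
  have Bmid: "B (x + z) y + B (x - z) y = 2 * B x y" if "x \<in> L" "y \<in> L" "z \<in> L" for x y z
  proof -
    have 1: "g ((x + z) + y) + g ((x - z) + y) = 2 * g (x + y) + 2 * g z"
      using gpar[OF Ladd[OF that(1,2)] that(3)] by (simp add: algebra_simps)
    have 2: "g ((x + z) - y) + g ((x - z) - y) = 2 * g (x - y) + 2 * g z"
      using gpar[OF Ldiff[OF that(1,2)] that(3)] by (simp add: algebra_simps)
    show ?thesis unfolding B_def using 1 2 by (simp add: field_simps)
  qed
  have B2: "B (2 *\<^sub>R x) y = 2 * B x y" if "x \<in> L" "y \<in> L" for x y
    using Bmid[OF that that(1)] B0[OF that(2)] by (simp add: scaleR_2)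
  have Badd: "B (a + b) y = B a y + B b y" if "a \<in> L" "b \<in> L" "y \<in> L" for a b y
  proof -
    define m where "m = (1/2) *\<^sub>R (a + b)"
    define d where "d = (1/2) *\<^sub>R (a - b)"
    have mL: "m \<in> L" unfolding m_def using Lscale Ladd that by blast
    have dL: "d \<in> L" unfolding d_def using Lscale Ldiff that by blast
    have "m + d = a" "m - d = b" "2 *\<^sub>R m = a + b" unfolding m_def d_def by (simp_all add: vec_eq_iff field_simps)
    then show ?thesis using Bmid[OF mL that(3) dL] B2[OF mL that(3)] by simp
  qed
  have Bscale: "B (t *\<^sub>R x) y = t * B x y" if "x \<in> L" "y \<in> L" for x y t
  proof -
    define h where "h s = B (s *\<^sub>R x) y" for s
    define N where "N = (norm x + norm y)\<^sup>2"
    define M where "M = (2 * r * N + 2 * \<bar>g x\<bar> + 2 * \<bar>g y\<bar>) / 4"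
    have hadd: "h (a + b) = h a + h b" for a b
      unfolding h_def using Badd[OF Lscale[OF that(1)] Lscale[OF that(1)] that(2)] by (simp add: scaleR_add_left)
    have hb: "h s \<ge> - M" if s: "\<bar>s\<bar> \<le> 1" for s
    proof -
      have sxL: "s *\<^sub>R x \<in> L" using Lscale \<open>x \<in> L\<close> by blast
      have nb: "(norm (s *\<^sub>R x + c))\<^sup>2 \<le> N" if "norm c = norm y" for c
      proof -
        have "norm (s *\<^sub>R x + c) \<le> \<bar>s\<bar> * norm x + norm y"
          using norm_triangle_ineq[of "s *\<^sub>R x" c] that by simp
        also have "\<dots> \<le> norm x + norm y" using s by (simp add: mult_left_le_one_le)
        finally show ?thesis unfolding N_def by (simp add: power_mono)
      qed
      have "r * (norm (s *\<^sub>R x + y))\<^sup>2 \<le> r * N" using nb[of y] r by (simp add: mult_left_mono)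
      then have A1: "g (s *\<^sub>R x + y) \<ge> - r * N"
        using glb[OF Ladd[OF sxL \<open>y \<in> L\<close>]] by linarith
      have "g (s *\<^sub>R x - y) = 2 * g (s *\<^sub>R x) + 2 * g y - g (s *\<^sub>R x + y)"
        using gpar[OF sxL \<open>y \<in> L\<close>] by simp
      also have "g (s *\<^sub>R x) = s\<^sup>2 * g x" using ghom \<open>x \<in> L\<close> by blast
      finally have A3: "g (s *\<^sub>R x - y) \<le> 2 * \<bar>g x\<bar> + 2 * \<bar>g y\<bar> + r * N"
      proof -
        assume e: "g (s *\<^sub>R x - y) = 2 * (s\<^sup>2 * g x) + 2 * g y - g (s *\<^sub>R x + y)"
        have s1: "s\<^sup>2 \<le> 1" using s by (simp add: abs_square_le_1)
        have "s\<^sup>2 * g x \<le> s\<^sup>2 * \<bar>g x\<bar>" by (simp add: mult_left_mono)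
        also have "\<dots> \<le> \<bar>g x\<bar>" using s1 by (simp add: mult_left_le_one_le)
        finally have "s\<^sup>2 * g x \<le> \<bar>g x\<bar>" .
        then show ?thesis using e A1 by linarith
      qed
      show ?thesis unfolding h_def B_def M_def using A1 A3 by (simp add: field_simps)
    qed
    have "h t = t * h 1" by (rule additive_bounded_linear[OF hadd hb])
    then show ?thesis unfolding h_def by simp
  qed
  obtain P where P: "linear P" "\<And>x. P x \<in> L" "\<And>x. x \<in> L \<Longrightarrow> P x = x"
    using proj_exists[OF subL] by blast
  define \<beta> where "\<beta> u v = 2 * B (P u) (P v)" for u v
  have l1: "linear (\<lambda>u. \<beta> u v)" for v
  proof (rule linearI)
    fix a b show "\<beta> (a + b) v = \<beta> a v + \<beta> b v"
      unfolding \<beta>_def using Badd[OF P(2) P(2) P(2)] linear_add[OF P(1)] by (simp add: algebra_simps)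
  next
    fix c a show "\<beta> (c *\<^sub>R a) v = c *\<^sub>R \<beta> a v"
      unfolding \<beta>_def using Bscale[OF P(2) P(2)] linear_scale[OF P(1)] by simp
  qed
  have l2: "linear (\<lambda>v. \<beta> u v)" for u
  proof -
    have "\<beta> u v = \<beta> v u" for v unfolding \<beta>_def using Bsym[OF P(2) P(2)] by simp
    then show ?thesis using l1[of u] by simp
  qed
  define A where "A = (\<chi> i j. \<beta> (axis i 1) (axis j 1))"
  have Asym: "transpose A = A"
    unfolding A_def transpose_def \<beta>_def using Bsym[OF P(2) P(2)] by (simp add: vec_eq_iff)
  have Aval: "x \<bullet> (A *v x) = \<beta> x x" for x unfolding A_def by (rule bilinear_matrix[OF l1 l2])
  have "f = (\<lambda>x. if x \<in> L then ereal ((1/2) * (x \<bullet> (A *v x))) else \<infinity>)"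
  proof
    fix x show "f x = (if x \<in> L then ereal ((1/2) * (x \<bullet> (A *v x))) else \<infinity>)"
    proof (cases "x \<in> L")
      case True
      then show ?thesis using fin[OF True] Aval[of x] P(3)[OF True] Bdiag[OF True] unfolding \<beta>_def by simp
    next
      case False then show ?thesis unfolding L_def by simp
    qed
  qed
  then show ?thesis unfolding gen_quad_form_def using Asym subL by blast
qed



lemma gqf_props:
  fixes q :: "real^'n \<Rightarrow> ereal"
  assumes "gen_quad_form q"
  shows gqf_nminf: "q x \<noteq> -\<infinity>" and gqf_0: "q 0 = 0"
    and gqf_hom: "t \<noteq> 0 \<Longrightarrow> q (t *\<^sub>R x) = ereal (t\<^sup>2) * q x"
    and gqf_par: "q (x + y) + q (x - y) = 2 * q x + 2 * q y"
proof -
  obtain A L where AL: "subspace L"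
    "q = (\<lambda>x. if x \<in> L then ereal ((1/2) * (x \<bullet> (A *v x))) else \<infinity>)"
    using assms unfolding gen_quad_form_def by blast
  show "q x \<noteq> -\<infinity>" using AL by simp
  show "q 0 = 0" using AL subspace_0[OF AL(1)] by simp
  show "q (t *\<^sub>R x) = ereal (t\<^sup>2) * q x" if t: "t \<noteq> 0"
  proof (cases "x \<in> L")
    case True
    then have "t *\<^sub>R x \<in> L" using AL(1) subspace_mul by blast
    then show ?thesis using True AL(2)
      by (simp add: matrix_vector_mult_scaleR power2_eq_square)
  next
    case False
    have "t *\<^sub>R x \<notin> L"
    proof
      assume "t *\<^sub>R x \<in> L"
      then have "(1/t) *\<^sub>R (t *\<^sub>R x) \<in> L" using AL(1) subspace_mul by blast
      then show False using t False by simp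
    qed
    then show ?thesis using False AL(2) t by simp
  qed
  show "q (x + y) + q (x - y) = 2 * q x + 2 * q y"
  proof (cases "x \<in> L \<and> y \<in> L")
    case True
    then have "x + y \<in> L" "x - y \<in> L" using AL(1) subspace_add subspace_diff by blast+
    then show ?thesis using True AL(2)
      by (simp add: algebra_simps inner_add_left inner_add_right inner_diff_left inner_diff_right)
  next
    case False
    have "\<not> (x + y \<in> L \<and> x - y \<in> L)"
    proof
      assume h: "x + y \<in> L \<and> x - y \<in> L"
      then have "(x + y) + (x - y) \<in> L" "(x + y) - (x - y) \<in> L"
        using AL(1) subspace_add subspace_diff by blast+
      then have "(1/2) *\<^sub>R ((x + y) + (x - y)) \<in> L" "(1/2) *\<^sub>R ((x + y) - (x - y)) \<in> L"
        using AL(1) subspace_mul by blast+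
      moreover have "(1/2) *\<^sub>R ((x + y) + (x - y)) = x" "(1/2) *\<^sub>R ((x + y) - (x - y)) = y"
        by (simp_all add: vec_eq_iff field_simps)
      ultimately show False using False by simp
    qed
    then show ?thesis using False AL(2) by auto
  qed
qed



lemma epi_liminf: "epi_converges qs q \<Longrightarrow> xs \<longlonglongrightarrow> x \<Longrightarrow> q x \<le> liminf (\<lambda>k. qs k (xs k))"
  unfolding epi_converges_def by blast

lemma epi_rec: assumes "epi_converges qs q"
  obtains xs where "xs \<longlonglongrightarrow> x" "limsup (\<lambda>k. qs k (xs k)) \<le> q x"
  using assms unfolding epi_converges_def by blast

lemma epi_zero:
  fixes qs :: "nat \<Rightarrow> real^'n \<Rightarrow> ereal"
  assumes "epi_converges qs q" "\<And>k. gen_quad_form (qs k)"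
  shows "q 0 \<le> 0"
  using epi_liminf[OF assms(1), of "\<lambda>k. 0" 0] gqf_0[OF assms(2)] by (simp add: Liminf_const)

lemma epi_lb:
  fixes qs :: "nat \<Rightarrow> real^'n \<Rightarrow> ereal"
  assumes "epi_converges qs q"
    and ev: "\<forall>\<^sub>F k in sequentially. \<forall>w. qs k w \<ge> ereal (- r * (norm w)\<^sup>2)"
  shows "q x \<ge> ereal (- r * (norm x)\<^sup>2)"
proof -
  obtain xs where xs: "xs \<longlonglongrightarrow> x" "limsup (\<lambda>k. qs k (xs k)) \<le> q x"
    using epi_rec[OF assms(1)] by blast
  have "((\<lambda>k. ereal (- r * (norm (xs k))\<^sup>2)) \<longlongrightarrow> ereal (- r * (norm x)\<^sup>2)) sequentially"
    by (intro tendsto_intros xs(1))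
  then have "liminf (\<lambda>k. ereal (- r * (norm (xs k))\<^sup>2)) = ereal (- r * (norm x)\<^sup>2)"
    by (intro lim_imp_Liminf) auto
  moreover have "liminf (\<lambda>k. ereal (- r * (norm (xs k))\<^sup>2)) \<le> liminf (\<lambda>k. qs k (xs k))"
    by (rule Liminf_mono) (use ev in \<open>auto elim: eventually_mono\<close>)
  moreover have "liminf (\<lambda>k. qs k (xs k)) \<le> limsup (\<lambda>k. qs k (xs k))"
    by (rule Liminf_le_Limsup) simp
  ultimately show ?thesis using xs(2) by simp
qed

lemma epi_hom_le:
  fixes qs :: "nat \<Rightarrow> real^'n \<Rightarrow> ereal"
  assumes "epi_converges qs q" "\<And>k. gen_quad_form (qs k)" "t \<noteq> 0"
  shows "q (t *\<^sub>R x) \<le> ereal (t\<^sup>2) * q x"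
proof -
  obtain xs where xs: "xs \<longlonglongrightarrow> x" "limsup (\<lambda>k. qs k (xs k)) \<le> q x"
    using epi_rec[OF assms(1)] by blast
  have "(\<lambda>k. t *\<^sub>R xs k) \<longlonglongrightarrow> t *\<^sub>R x" by (intro tendsto_intros xs(1))
  then have "q (t *\<^sub>R x) \<le> liminf (\<lambda>k. qs k (t *\<^sub>R xs k))" by (rule epi_liminf[OF assms(1)])
  also have "\<dots> = liminf (\<lambda>k. ereal (t\<^sup>2) * qs k (xs k))"
    using gqf_hom[OF assms(2) assms(3)] by simp
  also have "\<dots> \<le> limsup (\<lambda>k. ereal (t\<^sup>2) * qs k (xs k))"
    by (rule Liminf_le_Limsup) simp
  also have "\<dots> = ereal (t\<^sup>2) * limsup (\<lambda>k. qs k (xs k))"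
    by (rule limsup_ereal_mult_left) simp
  also have "\<dots> \<le> ereal (t\<^sup>2) * q x"
    by (rule ereal_mult_left_mono[OF xs(2)]) simp
  finally show ?thesis .
qed

lemma epi_par_le:
  fixes qs :: "nat \<Rightarrow> real^'n \<Rightarrow> ereal"
  assumes "epi_converges qs q" "\<And>k. gen_quad_form (qs k)" "\<And>z. q z \<noteq> -\<infinity>"
  shows "q (x + y) + q (x - y) \<le> 2 * q x + 2 * q y"
proof -
  obtain xs where xs: "xs \<longlonglongrightarrow> x" "limsup (\<lambda>k. qs k (xs k)) \<le> q x"
    using epi_rec[OF assms(1)] by blast
  obtain ys where ys: "ys \<longlonglongrightarrow> y" "limsup (\<lambda>k. qs k (ys k)) \<le> q y"
    using epi_rec[OF assms(1)] by blast
  define a where "a k = qs k (xs k + ys k)" for k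
  define b where "b k = qs k (xs k - ys k)" for k
  have la: "q (x + y) \<le> liminf a" unfolding a_def
    by (rule epi_liminf[OF assms(1)]) (intro tendsto_intros xs(1) ys(1))
  have lb: "q (x - y) \<le> liminf b" unfolding b_def
    by (rule epi_liminf[OF assms(1)]) (intro tendsto_intros xs(1) ys(1))
  have na: "liminf a \<noteq> -\<infinity>" using la assms(3)[of "x+y"] by auto
  have nb: "liminf b \<noteq> -\<infinity>" using lb assms(3)[of "x-y"] by auto
  have "q (x + y) + q (x - y) \<le> liminf a + liminf b" using la lb by (rule add_mono)
  also have "\<dots> \<le> liminf (\<lambda>k. a k + b k)"
    by (rule ereal_liminf_add_mono) (use na nb in auto)
  also have "\<dots> \<le> limsup (\<lambda>k. a k + b k)"
    by (rule Liminf_le_Limsup) simp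
  also have "\<dots> = limsup (\<lambda>k. ereal 2 * qs k (xs k) + ereal 2 * qs k (ys k))"
    unfolding a_def b_def using gqf_par[OF assms(2)] by simp
  also have "\<dots> \<le> limsup (\<lambda>k. ereal 2 * qs k (xs k)) + limsup (\<lambda>k. ereal 2 * qs k (ys k))"
    by (rule ereal_limsup_add_mono)
  also have "\<dots> = ereal 2 * limsup (\<lambda>k. qs k (xs k)) + ereal 2 * limsup (\<lambda>k. qs k (ys k))"
    by (simp add: limsup_ereal_mult_left)
  also have "\<dots> \<le> ereal 2 * q x + ereal 2 * q y"
    by (intro add_mono ereal_mult_left_mono xs(2) ys(2)) simp_all
  finally show ?thesis by simp
qed



lemma part2:
  fixes qs :: "nat \<Rightarrow> real^'n \<Rightarrow> ereal"
  assumes gq: "\<And>k. gen_quad_form (qs k)" and epi: "epi_converges qs q" and r: "r \<ge> 0"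
    and ev: "\<forall>\<^sub>F k in sequentially. \<forall>w. qs k w \<ge> ereal (- r * (norm w)\<^sup>2)"
  shows "gen_quad_form q \<and> (\<forall>w. q w \<ge> ereal (- r * (norm w)\<^sup>2))"
proof -
  have lbq: "q w \<ge> ereal (- r * (norm w)\<^sup>2)" for w by (rule epi_lb[OF epi ev])
  have nm: "q z \<noteq> -\<infinity>" for z using lbq[of z] by auto
  have f0a: "q 0 \<le> 0" using epi_zero[OF epi gq] .
  have f0b: "0 \<le> q 0" using lbq[of 0] zero_ereal_def by (metis mult_zero_right norm_zero power_zero_numeral)
  have f0: "q 0 = 0" using f0a f0b by (rule antisym)
  have hom: "q (t *\<^sub>R x) = ereal (t\<^sup>2) * q x" if t: "t \<noteq> 0" for t x
  proof (rule antisym)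
    show "q (t *\<^sub>R x) \<le> ereal (t\<^sup>2) * q x" by (rule epi_hom_le[OF epi gq t])
    have "q ((1/t) *\<^sub>R (t *\<^sub>R x)) \<le> ereal ((1/t)\<^sup>2) * q (t *\<^sub>R x)"
      by (rule epi_hom_le[OF epi gq]) (use t in simp)
    then have "q x \<le> ereal ((1/t)\<^sup>2) * q (t *\<^sub>R x)" using t by simp
    then have "ereal (t\<^sup>2) * q x \<le> ereal (t\<^sup>2) * (ereal ((1/t)\<^sup>2) * q (t *\<^sub>R x))"
      by (rule ereal_mult_left_mono) simp
    also have "\<dots> = ereal (t\<^sup>2 * (1/t)\<^sup>2) * q (t *\<^sub>R x)"
      by (simp only: mult.assoc[symmetric] times_ereal.simps(1))
    also have "t\<^sup>2 * (1/t)\<^sup>2 = 1" using t by (simp add: power_divide)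
    finally show "ereal (t\<^sup>2) * q x \<le> q (t *\<^sub>R x)" by simp
  qed
  have par: "q (x + y) + q (x - y) = 2 * q x + 2 * q y" for x y
  proof -
    have 1: "q (x + y) + q (x - y) \<le> 2 * q x + 2 * q y" by (rule epi_par_le[OF epi gq nm])
    have "q ((x + y) + (x - y)) + q ((x + y) - (x - y)) \<le> 2 * q (x + y) + 2 * q (x - y)"
      by (rule epi_par_le[OF epi gq nm])
    moreover have "(x + y) + (x - y) = 2 *\<^sub>R x" "(x + y) - (x - y) = 2 *\<^sub>R y"
      by (simp_all add: vec_eq_iff)
    ultimately have 2: "ereal 4 * q x + ereal 4 * q y \<le> 2 * q (x + y) + 2 * q (x - y)"
      using hom[of 2] by simp
    show ?thesis using 1 2 nm[of x] nm[of y] nm[of "x+y"] nm[of "x-y"]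
      by (cases "q x"; cases "q y"; cases "q (x+y)"; cases "q (x-y)") auto
  qed
  have "gen_quad_form q" by (rule quad_char[OF r lbq f0 hom par])
  then show ?thesis using lbq by blast
qed

lemma select_seq:
  fixes P :: "nat \<Rightarrow> nat \<Rightarrow> 'b \<Rightarrow> bool"
  assumes ex: "\<And>m. \<exists>N. \<forall>k\<ge>N. \<exists>y. P m k y"
    and mono: "\<And>m m' k y. m \<le> m' \<Longrightarrow> P m' k y \<Longrightarrow> P m k y"
  shows "\<exists>ys. \<forall>m. eventually (\<lambda>k. P m k (ys k)) sequentially"
proof -
  define S where "S k = {m. m \<le> k \<and> (\<exists>y. P m k y)}" for k
  define \<mu> where "\<mu> k = Max (S k)" for k
  define ys where "ys k = (SOME y. P (\<mu> k) k y)" for k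
  have "eventually (\<lambda>k. P m k (ys k)) sequentially" for m
  proof -
    obtain N where N: "\<forall>k\<ge>N. \<exists>y. P m k y" using ex by blast
    have "P m k (ys k)" if k: "k \<ge> max m N" for k
    proof -
      have mS: "m \<in> S k" unfolding S_def using N k by auto
      have fin: "finite (S k)" unfolding S_def by (rule finite_subset[of _ "{..k}"]) auto
      have "\<mu> k \<in> S k" unfolding \<mu>_def using Max_in[OF fin] mS by blast
      then have "\<exists>y. P (\<mu> k) k y" unfolding S_def by blast
      then have "P (\<mu> k) k (ys k)" unfolding ys_def by (rule someI_ex)
      moreover have "m \<le> \<mu> k" unfolding \<mu>_def using Max_ge[OF fin mS] .
      ultimately show ?thesis using mono by blast
    qed
    then show ?thesis unfolding eventually_sequentially by blast
  qed
  then show ?thesis by blast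
qed

lemma epi_compact:
  fixes f :: "nat \<Rightarrow> 'a::{metric_space, second_countable_topology} \<Rightarrow> ereal"
  shows "\<exists>s q. strict_mono s \<and> epi_converges (f \<circ> s) q"
proof -
  obtain BB :: "'a set set" where BB: "countable BB" "topological_basis BB"
    using ex_countable_basis by blast
  have BBne: "BB \<noteq> {}"
  proof
    assume "BB = {}"
    then show False using topological_basisE[OF BB(2) open_UNIV, of undefined] by auto
  qed
  define b where "b = from_nat_into BB"
  have bB: "b j \<in> BB" for j unfolding b_def using from_nat_into[OF BBne] .
  have bopen: "open (b j)" for j using topological_basis_open[OF BB(2) bB] .
  have bbase: "\<exists>j. x \<in> b j \<and> b j \<subseteq> U" if U: "open U" "x \<in> U" for x U
  proof -
    obtain X where X: "X \<in> BB" "x \<in> X" "X \<subseteq> U" using topological_basisE[OF BB(2) U] by blast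
    then obtain j where "b j = X" unfolding b_def using from_nat_into_surj[OF BB(1)] by blast
    then show ?thesis using X by blast
  qed
  define g where "g j k = Inf (f k ` b j)" for j k
  interpret subseqs "\<lambda>j s. convergent (\<lambda>k. g j (s k))"
  proof
    fix j and s :: "nat \<Rightarrow> nat" assume "strict_mono s"
    obtain l r where "strict_mono r" "((\<lambda>k. g j (s k)) \<circ> r) \<longlonglongrightarrow> l"
      using compact_complete_linorder[of "\<lambda>k. g j (s k)"] by blast
    then show "\<exists>r'. strict_mono r' \<and> convergent (\<lambda>k. g j ((s \<circ> r') k))"
      unfolding convergent_def by (auto simp: o_def)
  qed
  define s where "s = diagseq"
  have smono: "strict_mono s" unfolding s_def by (rule subseq_diagseq)
  have conv: "convergent (\<lambda>k. g j (s k))" for j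
  proof -
    have "convergent (\<lambda>k. g j ((diagseq \<circ> (+) (Suc j)) k))"
    proof (rule diagseq_holds)
      fix r s' :: "nat \<Rightarrow> nat" and n assume "strict_mono r" "convergent (\<lambda>k. g n (s' k))"
      then show "convergent (\<lambda>k. g n ((s' \<circ> r) k))"
        using convergent_subseq_convergent[of "\<lambda>k. g n (s' k)" r] by (simp add: o_def)
    qed
    then obtain l where "(\<lambda>k. g j (diagseq (k + Suc j))) \<longlonglongrightarrow> l"
      unfolding convergent_def by (auto simp: o_def add.commute)
    then have "(\<lambda>k. g j (diagseq k)) \<longlonglongrightarrow> l" by (rule LIMSEQ_offset)
    then show ?thesis unfolding s_def convergent_def by blast
  qed
  define l where "l j = lim (\<lambda>k. g j (s k))" for j
  have lconv: "(\<lambda>k. g j (s k)) \<longlonglongrightarrow> l j" for j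
    unfolding l_def using conv[of j] by (simp add: convergent_LIMSEQ_iff)
  define q where "q x = (SUP j\<in>{j. x \<in> b j}. l j)" for x
  have part1: "q x \<le> liminf (\<lambda>k. f (s k) (xs k))" if xs: "xs \<longlonglongrightarrow> x" for x xs
    unfolding q_def
  proof (rule SUP_least)
    fix j assume "j \<in> {j. x \<in> b j}"
    then have "eventually (\<lambda>k. xs k \<in> b j) sequentially"
      using topological_tendstoD[OF xs bopen] by auto
    then have ev: "eventually (\<lambda>k. g j (s k) \<le> f (s k) (xs k)) sequentially"
      by eventually_elim (auto simp: g_def intro: Inf_lower)
    have "l j = liminf (\<lambda>k. g j (s k))" using lim_imp_Liminf[OF _ lconv[of j]] by simp
    also have "\<dots> \<le> liminf (\<lambda>k. f (s k) (xs k))" by (rule Liminf_mono[OF ev])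
    finally show "l j \<le> liminf (\<lambda>k. f (s k) (xs k))" .
  qed
  have part2: "\<exists>xs. xs \<longlonglongrightarrow> x \<and> limsup (\<lambda>k. f (s k) (xs k)) \<le> q x" for x
  proof (cases "q x = \<infinity>")
    case True
    then show ?thesis by (intro exI[of _ "\<lambda>k. x"]) auto
  next
    case False
    define t where "t m = (if q x = -\<infinity> then ereal (- real m) else q x + ereal (1 / real (Suc m)))" for m
    have tgt: "q x < t m" for m
      using False unfolding t_def by (cases "q x") auto
    have tmono: "t m' \<le> t m" if "m \<le> m'" for m m'
    proof -
      have "1 / real (Suc m') \<le> 1 / real (Suc m)" using that by (simp add: frac_le)
      then show ?thesis using that False unfolding t_def by (cases "q x") auto
    qed
    define P where "P m k y \<longleftrightarrow> dist y x < 1 / real (Suc m) \<and> f (s k) y < t m" for m k y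
    have ex: "\<exists>N. \<forall>k\<ge>N. \<exists>y. P m k y" for m
    proof -
      obtain j where j: "x \<in> b j" "b j \<subseteq> ball x (1 / real (Suc m))"
        using bbase[of "ball x (1 / real (Suc m))" x] by auto
      have "l j \<le> q x" unfolding q_def using j(1) by (auto intro: SUP_upper)
      then have "l j < t m" using tgt[of m] by simp
      then have "eventually (\<lambda>k. g j (s k) < t m) sequentially"
        using order_tendstoD(2)[OF lconv[of j]] by blast
      then obtain N where N: "\<forall>k\<ge>N. g j (s k) < t m" unfolding eventually_sequentially by blast
      have "\<exists>y. P m k y" if "k \<ge> N" for k
      proof -
        have "Inf (f (s k) ` b j) < t m" using N that unfolding g_def by blast
        then obtain y where y: "y \<in> b j" "f (s k) y < t m" unfolding Inf_less_iff by blast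
        then have "y \<in> ball x (1 / real (Suc m))" using j(2) by blast
        then have "dist y x < 1 / real (Suc m)" by (simp add: dist_commute)
        then show ?thesis unfolding P_def using y(2) by blast
      qed
      then show ?thesis by blast
    qed
    have mono: "P m k y" if "m \<le> m'" "P m' k y" for m m' k y
    proof -
      have "1 / real (Suc m') \<le> 1 / real (Suc m)" using that by (simp add: frac_le)
      then show ?thesis using that tmono[OF that(1)] unfolding P_def by auto
    qed
    have "\<exists>ys. \<forall>m. eventually (\<lambda>k. P m k (ys k)) sequentially"
      using ex mono by (rule select_seq)
    then obtain ys where ys: "\<And>m. eventually (\<lambda>k. P m k (ys k)) sequentially"
      by blast
    have lim: "ys \<longlonglongrightarrow> x"
    proof (rule tendstoI)
      fix e :: real assume "e > 0"
      then obtain m where "inverse (real (Suc m)) < e"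
        using reals_Archimedean by blast
      then have m: "1 / real (Suc m) < e" by (simp add: inverse_eq_divide)
      show "eventually (\<lambda>k. dist (ys k) x < e) sequentially"
        using ys[of m] by eventually_elim (use m in \<open>auto simp: P_def\<close>)
    qed
    have ls: "limsup (\<lambda>k. f (s k) (ys k)) \<le> t m" for m
      by (rule Limsup_bounded) (use ys[of m] in \<open>auto simp: P_def elim: eventually_mono\<close>)
    have "limsup (\<lambda>k. f (s k) (ys k)) \<le> q x"
    proof (cases "q x = -\<infinity>")
      case True
      have "limsup (\<lambda>k. f (s k) (ys k)) = -\<infinity>"
      proof (rule ereal_bot)
        fix B :: real
        obtain m :: nat where "- B < real m" using reals_Archimedean2 by blast
        then have "t m \<le> ereal B" using True unfolding t_def by simp
        then show "limsup (\<lambda>k. f (s k) (ys k)) \<le> ereal B" using ls[of m] by simp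
      qed
      then show ?thesis by simp
    next
      case qf: False
      show ?thesis
      proof (rule ereal_le_epsilon2)
        fix e :: real assume "e > 0"
        then obtain m where "inverse (real (Suc m)) < e"
          using reals_Archimedean by blast
        then have m: "1 / real (Suc m) < e" by (simp add: inverse_eq_divide)
        have "t m \<le> q x + ereal e" using qf m unfolding t_def
          by (cases "q x") auto
        then show "limsup (\<lambda>k. f (s k) (ys k)) \<le> q x + ereal e" using ls[of m] by simp
      qed
    qed
    then show ?thesis using lim by blast
  qed
  have "epi_converges (f \<circ> s) q"
    unfolding epi_converges_def using part1 part2 by (simp add: o_def)
  then show ?thesis using smono by blast
qed


theorem proposition6p2:
  fixes qs :: "nat \<Rightarrow> real^'n \<Rightarrow> ereal"
  assumes "\<And>k. gen_quad_form (qs k)"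
  shows "(\<exists>s q. strict_mono s \<and> epi_converges (qs \<circ> s) q \<and> (\<exists>x. q x \<noteq> \<infinity>))
     \<and> (\<forall>q r. epi_converges qs q \<and> r \<ge> 0 \<and>
          (\<forall>\<^sub>F k in sequentially. \<forall>w. qs k w \<ge> ereal (- r * (norm w)\<^sup>2))
        \<longrightarrow> gen_quad_form q \<and> (\<forall>w. q w \<ge> ereal (- r * (norm w)\<^sup>2)))"
proof (rule conjI)
  obtain s q where sq: "strict_mono s" "epi_converges (qs \<circ> s) q"
    using epi_compact[of qs] by blast
  have "gen_quad_form ((qs \<circ> s) k)" for k using assms by simp
  then have "q 0 \<le> 0" using epi_zero[OF sq(2)] by blast
  then have "q 0 \<noteq> \<infinity>" by auto
  then show "\<exists>s q. strict_mono s \<and> epi_converges (qs \<circ> s) q \<and> (\<exists>x. q x \<noteq> \<infinity>)"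
    using sq by blast
next
  show "\<forall>q r. epi_converges qs q \<and> r \<ge> 0 \<and>
          (\<forall>\<^sub>F k in sequentially. \<forall>w. qs k w \<ge> ereal (- r * (norm w)\<^sup>2))
        \<longrightarrow> gen_quad_form q \<and> (\<forall>w. q w \<ge> ereal (- r * (norm w)\<^sup>2))"
  proof (intro allI impI)
  fix q r
  assume h: "epi_converges qs q \<and> r \<ge> 0 \<and>
          (\<forall>\<^sub>F k in sequentially. \<forall>w. qs k w \<ge> ereal (- r * (norm w)\<^sup>2))"
  show "gen_quad_form q \<and> (\<forall>w. q w \<ge> ereal (- r * (norm w)\<^sup>2))"
    using part2[where qs=qs and q=q and r=r, OF assms] h by blast
  qed
qed

end
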